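(* Let $\tilde p,\tilde d\in C^{2}((0,1],\mathbb{R})$, $\tilde b\in C^2((0,1],\mathbb{C})$, $\tilde c\in C^1((0,1],\mathbb{C})$, $\tilde q\in C((0,1],\mathbb{R})$ with $\tilde p>0$ on $(0,1]$, and $w_1,w_2\in C^2((0,1],\mathbb{R})$ with $w:=w_1w_2>0$ on $(0,1)$. Assume: ($\tilde{\mathrm B}$1) the (possibly improper) limit $\tilde d_0:=\lim_{x\to0+}\tilde d(x)$ exists; ($\tilde{\mathrm B}$2) there are $\tilde\beta,\tilde\gamma>0$ with $|\tilde b(x)/x|\le\tilde\beta(|\tilde d(x)|+1)$, $|\tilde c(x)|\le\tilde\gamma(|\tilde d(x)|+1)$ for all $x\in(0,1]$; ($\tilde{\mathrm B}$3a) for some $\lambda\in\mathbb{R}\setminus\{\tilde d_0\}$ there is $x_\lambda\in(0,1)$ such that $\tilde\pi(x,\lambda)/x^2$ is bounded on $(0,x_\lambda]$; ($\tilde{\mathrm B}$3b) for all $\lambda\in\mathbb{R}\setminus(\overline{\tilde\Delta((0,1])}\cup\{\tilde d_0\})$ there is $x_\lambda\in(0,1)$ such that $x^2/\tilde\pi(x,\lambda)$, $\tilde\rho(x,\lambda)/x$, $\tilde\kappa(x,\lambda)$ are (defined and) bounded on $(0,x_\lambda]$; ($\tilde{\mathrm C}$1) for $\lambda\in\mathbb{R}\setminus(\overline{\tilde\Delta((0,1])}\cup\{\tilde d_0\})$ the limits $\tilde\rho_0(\lambda):=\lim_{x\to0+}\frac{x\tilde\rho(x,\lambda)}{\tilde\pi(x,\lambda)}$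 and $\tilde\kappa_0(\lambda):=\lim_{x\to0+}\frac{x^2\tilde\kappa(x,\lambda)}{\tilde\pi(x,\lambda)}$ exist and are finite; ($\tilde{\mathrm C}$2) the limit $\lim_{x\to0+}\frac{x^2w''(x)}{w(x)}$ exists and is finite. Let $W(t):=1+e^{-t}\frac{w'(e^{-t})}{w(e^{-t})}$, $t\in[0,\infty)$. Then for $\lambda\in\mathbb{R}\setminus(\overline{\tilde\Delta((0,1])}\cup\{\tilde d_0\})$, $$\lim_{x\to0+}x\frac{\frac{\partial}{\partial x}\tilde\pi(x,\lambda)}{\tilde\pi(x,\lambda)}=2,$$ $\lim_{t\to\infty}W(t)$ exists and is finite, $\lim_{t\to\infty}W'(t)=0$, and $\operatorname{Im}\tilde\rho_0(\lambda)=1+\lim_{t\to\infty}W(t)$.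
   Context: Definitions (for $x\in(0,1]$ with $\tilde d(x)\ne\lambda$): $\tilde\pi(x,\lambda):=\frac{w_2}{w_1}\tilde p-\frac{|\tilde b|^2}{\tilde d-\lambda}$; $\tilde\rho(x,\lambda):=-\frac{2\operatorname{Im}(\tilde b\overline{\tilde c})}{\tilde d-\lambda}+i\frac1w\frac{\partial}{\partial x}(w\tilde\pi(\cdot,\lambda))$; $\tilde\kappa(x,\lambda):=\tilde q-\lambda-\frac{|\tilde c|^2}{\tilde d-\lambda}+\frac1w\Big(w\frac{\overline{\tilde b}\tilde c}{\tilde d-\lambda}\Big)'-\frac{(\tilde p w_2')'}{w_1}$; $\tilde\Delta(x):=\tilde d(x)-\frac{w_1(x)}{w_2(x)}\frac{|\tilde b(x)|^2}{\tilde p(x)}$. Overline on a set denotes closure in $\mathbb{R}$. *)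

theory Defs
  imports "HOL-Analysis.Analysis" "HOL-Library.Extended_Real"
begin

text \<open>C^1 / C^2 on a set S (one-sided derivatives at boundary points of S), for
  functions of a real variable with values in a normed vector space.\<close>
definition C1_on :: "real set \<Rightarrow> (real \<Rightarrow> 'a::real_normed_vector) \<Rightarrow> bool" where
  "C1_on S f \<longleftrightarrow> (\<exists>f'. (\<forall>x\<in>S. (f has_vector_derivative f' x) (at x within S))
                        \<and> continuous_on S f')"

definition C2_on :: "real set \<Rightarrow> (real \<Rightarrow> 'a::real_normed_vector) \<Rightarrow> bool" where
  "C2_on S f \<longleftrightarrow> (\<exists>f' f''. (\<forall>x\<in>S. (f has_vector_derivative f' x) (at x within S))
                        \<and> (\<forall>x\<in>S. (f' has_vector_derivative f'' x) (at x within S))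
                        \<and> continuous_on S f'')"

definition wt :: "(real \<Rightarrow> real) \<Rightarrow> (real \<Rightarrow> real) \<Rightarrow> real \<Rightarrow> real" where
  "wt w1 w2 x = w1 x * w2 x"

definition pit :: "(real \<Rightarrow> real) \<Rightarrow> (real \<Rightarrow> complex) \<Rightarrow> (real \<Rightarrow> real) \<Rightarrow>
    (real \<Rightarrow> real) \<Rightarrow> (real \<Rightarrow> real) \<Rightarrow> real \<Rightarrow> real \<Rightarrow> real" where
  "pit p b d w1 w2 x lam = w2 x / w1 x * p x - (cmod (b x))\<^sup>2 / (d x - lam)"

definition rhot :: "(real \<Rightarrow> real) \<Rightarrow> (real \<Rightarrow> complex) \<Rightarrow> (real \<Rightarrow> complex) \<Rightarrow>
    (real \<Rightarrow> real) \<Rightarrow> (real \<Rightarrow> real) \<Rightarrow> (real \<Rightarrow> real) \<Rightarrow> real \<Rightarrow> real \<Rightarrow> complex" where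
  "rhot p b c d w1 w2 x lam =
     complex_of_real (- 2 * Im (b x * cnj (c x)) / (d x - lam))
     + \<i> * complex_of_real (1 / wt w1 w2 x
            * deriv (\<lambda>y. wt w1 w2 y * pit p b d w1 w2 y lam) x)"

definition kappat :: "(real \<Rightarrow> real) \<Rightarrow> (real \<Rightarrow> complex) \<Rightarrow> (real \<Rightarrow> complex) \<Rightarrow>
    (real \<Rightarrow> real) \<Rightarrow> (real \<Rightarrow> real) \<Rightarrow> (real \<Rightarrow> real) \<Rightarrow> (real \<Rightarrow> real) \<Rightarrow>
    real \<Rightarrow> real \<Rightarrow> complex" where
  "kappat p b c d q w1 w2 x lam =
     complex_of_real (q x - lam - (cmod (c x))\<^sup>2 / (d x - lam))
     + complex_of_real (1 / wt w1 w2 x)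
       * vector_derivative
           (\<lambda>y. complex_of_real (wt w1 w2 y) * (cnj (b y) * c y) / complex_of_real (d y - lam))
           (at x)
     - complex_of_real (deriv (\<lambda>y. p y * deriv w2 y) x / w1 x)"

definition Deltat :: "(real \<Rightarrow> real) \<Rightarrow> (real \<Rightarrow> complex) \<Rightarrow> (real \<Rightarrow> real) \<Rightarrow>
    (real \<Rightarrow> real) \<Rightarrow> (real \<Rightarrow> real) \<Rightarrow> real \<Rightarrow> real" where
  "Deltat p b d w1 w2 x = d x - w1 x / w2 x * (cmod (b x))\<^sup>2 / p x"

end

theory Submission
  imports Defs
begin


lemma grows:
  fixes u ud :: "real \<Rightarrow> real"
  assumes du: "\<forall>t\<ge>T. (u has_real_derivative ud t) (at t)"
    and ge: "\<forall>t\<ge>T. ud t \<ge> \<delta>"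
  shows "\<forall>t\<ge>T. u t \<ge> u T + \<delta> * (t - T)"
proof (intro allI impI)
  fix t assume t: "t \<ge> T"
  show "u t \<ge> u T + \<delta> * (t - T)"
  proof (cases "t = T")
    case False
    then have "T < t" using t by simp
    from MVT2[OF this, of u ud] du obtain z where z: "z > T" "z < t" "u t - u T = (t - T) * ud z"
      by auto
    have "(t - T) * ud z \<ge> (t - T) * \<delta>" using ge z t by (intro mult_left_mono) auto
    then show ?thesis using z by (simp add: algebra_simps)
  qed simp
qed

lemma no_drift:
  fixes u ud :: "real \<Rightarrow> real"
  assumes du: "eventually (\<lambda>t. (u has_real_derivative ud t) (at t)) at_top"
    and ub: "eventually (\<lambda>t. \<bar>u t\<bar> \<le> M) at_top"
    and dp: "\<delta> > 0"
    and ge: "eventually (\<lambda>t. ud t \<ge> \<delta>) at_top"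
  shows False
proof -
  from eventually_conj[OF du eventually_conj[OF ub ge]] obtain T where
    T: "\<forall>t\<ge>T. (u has_real_derivative ud t) (at t) \<and> \<bar>u t\<bar> \<le> M \<and> ud t \<ge> \<delta>"
    unfolding eventually_at_top_linorder by blast
  have g: "\<forall>t\<ge>T. u t \<ge> u T + \<delta> * (t - T)" using grows[of T u ud \<delta>] T by blast
  define t where "t = T + (2 * M + 1) / \<delta>"
  have "M \<ge> 0" using T by (meson abs_ge_zero order.trans order_refl)
  then have tT: "t \<ge> T" using dp by (simp add: t_def)
  have "\<delta> * (t - T) = 2 * M + 1" using dp by (simp add: t_def)
  then have "u t \<ge> u T + 2 * M + 1" using g tT by force
  moreover have "\<bar>u t\<bar> \<le> M" "\<bar>u T\<bar> \<le> M" using T tT by auto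
  ultimately show False by linarith
qed

lemma no_drift_neg:
  fixes u ud :: "real \<Rightarrow> real"
  assumes du: "eventually (\<lambda>t. (u has_real_derivative ud t) (at t)) at_top"
    and ub: "eventually (\<lambda>t. \<bar>u t\<bar> \<le> M) at_top"
    and dp: "\<delta> > 0"
    and le: "eventually (\<lambda>t. ud t \<le> - \<delta>) at_top"
  shows False
proof -
  have a: "eventually (\<lambda>t. ((\<lambda>t. - u t) has_real_derivative - ud t) (at t)) at_top"
    using du by eventually_elim (rule DERIV_minus)
  have b: "eventually (\<lambda>t. \<bar>- u t\<bar> \<le> M) at_top" using ub by simp
  have c: "eventually (\<lambda>t. - ud t \<ge> \<delta>) at_top" using le by eventually_elim simp
  show False by (rule no_drift[OF a b dp c])
qed

lemma stays_above:
  fixes h hd :: "real \<Rightarrow> real"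
  assumes der: "\<forall>t\<ge>S. (h has_real_derivative hd t) (at t)"
    and cross: "\<forall>t\<ge>S. h t = y \<longrightarrow> hd t > 0"
    and s1: "S \<le> s1" "h s1 \<ge> y"
  shows "\<forall>s\<ge>s1. h s \<ge> y"
proof (rule ccontr)
  assume "\<not> ?thesis"
  then obtain s2 where s2: "s2 \<ge> s1" "h s2 < y" by auto
  have cont: "\<forall>t\<ge>S. isCont h t" using der DERIV_isCont by blast
  define A where "A = {s1..s2} \<inter> h -` {y..}"
  have co: "continuous_on {s1..s2} h" using cont s1 
    by (intro continuous_at_imp_continuous_on) auto
  have "closed A" unfolding A_def
    by (rule continuous_closed_preimage[OF co]) auto
  have Ane: "s1 \<in> A" using s1 s2 by (auto simp: A_def)
  have bdd: "bdd_above A" unfolding A_def by (rule bdd_aboveI[of _ s2]) auto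
  define \<sigma> where "\<sigma> = Sup A"
  have sA: "\<sigma> \<in> A" unfolding \<sigma>_def by (rule closed_contains_Sup[OF _ bdd \<open>closed A\<close>]) (use Ane in auto)
  then have s: "s1 \<le> \<sigma>" "\<sigma> \<le> s2" "h \<sigma> \<ge> y" by (auto simp: A_def)
  have ic: "\<forall>x. \<sigma> \<le> x \<and> x \<le> s2 \<longrightarrow> isCont h x" using cont s s1 by auto
  obtain z where z: "\<sigma> \<le> z" "z \<le> s2" "h z = y"
    using IVT2[of h s2 y \<sigma>, OF less_imp_le[OF s2(2)] s(3) s(2) ic] by blast
  then have "z \<in> A" using s by (auto simp: A_def)
  then have "z \<le> \<sigma>" unfolding \<sigma>_def using bdd by (rule cSup_upper)
  then have hs: "h \<sigma> = y" using z by simp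
  have "\<sigma> < s2" using hs s2 s by (cases "\<sigma> = s2") auto
  have "hd \<sigma> > 0" using cross hs s s1 by auto
  have dsig: "(h has_real_derivative hd \<sigma>) (at \<sigma>)" using der s s1 by auto
  from DERIV_pos_inc_right[OF dsig \<open>hd \<sigma> > 0\<close>] obtain dl where
    dl: "dl > 0" "\<forall>e>0. e < dl \<longrightarrow> h \<sigma> < h (\<sigma> + e)" by blast
  obtain m where m: "0 < m" "m \<le> dl" "m \<le> s2 - \<sigma>"
    using dl \<open>\<sigma> < s2\<close> by (intro that[of "min dl (s2 - \<sigma>)"]) auto
  define e where "e = m / 2"
  have e1: "e > 0" using m unfolding e_def by simp
  have e2: "e < dl" using m unfolding e_def by linarith
  have e3: "\<sigma> + e \<le> s2" using m unfolding e_def by linarith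
  note e = e1 e2 e3
  then have "h (\<sigma> + e) > y" using dl hs by auto
  then have "\<sigma> + e \<in> A" using s e by (auto simp: A_def)
  then have "\<sigma> + e \<le> \<sigma>" unfolding \<sigma>_def using bdd by (rule cSup_upper)
  then show False using e by simp
qed

lemma dichot:
  fixes h hd g :: "real \<Rightarrow> real"
  assumes dh: "eventually (\<lambda>t. (h has_real_derivative hd t) (at t)) at_top"
    and eh: "((\<lambda>t. hd t - g (h t)) \<longlongrightarrow> 0) at_top"
    and gy: "g y \<noteq> 0"
  shows "eventually (\<lambda>t. h t \<ge> y) at_top \<or> eventually (\<lambda>t. h t \<le> y) at_top"
proof -
  have "eventually (\<lambda>t. \<bar>hd t - g (h t)\<bar> < \<bar>g y\<bar>) at_top"
    using tendstoD[OF eh, of "\<bar>g y\<bar>"] gy by (simp add: dist_real_def)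
  from eventually_conj[OF dh this] obtain S where
    S: "\<forall>t\<ge>S. (h has_real_derivative hd t) (at t) \<and> \<bar>hd t - g (h t)\<bar> < \<bar>g y\<bar>"
    unfolding eventually_at_top_linorder by blast
  show ?thesis
  proof (cases "g y > 0")
    case True
    have cross: "\<forall>t\<ge>S. h t = y \<longrightarrow> hd t > 0" using S True by force
    show ?thesis
    proof (cases "\<exists>s1\<ge>S. h s1 \<ge> y")
      case True
      then obtain s1 where "s1 \<ge> S" "h s1 \<ge> y" by blast
      then have "\<forall>s\<ge>s1. h s \<ge> y" using stays_above[of S h hd y s1] S cross by blast
      then show ?thesis unfolding eventually_at_top_linorder by blast
    next
      case False
      then have "\<forall>s\<ge>S. h s \<le> y" by force
      then show ?thesis unfolding eventually_at_top_linorder by blast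
    qed
  next
    case False
    then have neg: "g y < 0" using gy by simp
    have der: "\<forall>t\<ge>S. ((\<lambda>t. - h t) has_real_derivative - hd t) (at t)" using S DERIV_minus by blast
    have cross: "\<forall>t\<ge>S. - h t = - y \<longrightarrow> - hd t > 0" using S neg by force
    show ?thesis
    proof (cases "\<exists>s1\<ge>S. h s1 \<le> y")
      case True
      then obtain s1 where "s1 \<ge> S" "- h s1 \<ge> - y" by force
      then have "\<forall>s\<ge>s1. - h s \<ge> - y"
        using stays_above[of S "\<lambda>t. - h t" "\<lambda>t. - hd t" "- y" s1] der cross by blast
      then show ?thesis unfolding eventually_at_top_linorder by force
    next
      case False
      then have "\<forall>s\<ge>S. h s \<ge> y" by force
      then show ?thesis unfolding eventually_at_top_linorder by blast
    qed
  qed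
qed

lemma quad_nonroot:
  fixes K0 a b :: real
  assumes "a < b"
  shows "\<exists>y. a < y \<and> y < b \<and> y\<^sup>2 - y - K0 \<noteq> 0"
proof (rule ccontr)
  assume "\<not> ?thesis"
  then have H: "\<And>y. a < y \<Longrightarrow> y < b \<Longrightarrow> y\<^sup>2 - y - K0 = 0" by blast
  define y1 y2 y3 where "y1 = a + (b - a) / 4" "y2 = a + (b - a) / 2" "y3 = a + 3 * (b - a) / 4"
  have r1: "y1\<^sup>2 - y1 - K0 = 0" by (rule H) (use assms in \<open>simp_all add: y1_y2_y3_def field_simps\<close>)
  have r2: "y2\<^sup>2 - y2 - K0 = 0" by (rule H) (use assms in \<open>simp_all add: y1_y2_y3_def field_simps\<close>)
  have r3: "y3\<^sup>2 - y3 - K0 = 0" by (rule H) (use assms in \<open>simp_all add: y1_y2_y3_def field_simps\<close>)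
  note r = r1 r2 r3
  have "(y1 - y2) * (y1 + y2 - 1) = 0" using r by (simp add: algebra_simps power2_eq_square)
  then have "y1 + y2 = 1" using assms by (auto simp: y1_y2_y3_def)
  have "(y1 - y3) * (y1 + y3 - 1) = 0" using r by (simp add: algebra_simps power2_eq_square)
  then have "y1 + y3 = 1" using assms by (auto simp: y1_y2_y3_def)
  with \<open>y1 + y2 = 1\<close> have "y2 = y3" by simp
  then show False using assms by (simp add: y1_y2_y3_def)
qed

lemma aux1: fixes a b c y :: real shows "a \<le> y \<Longrightarrow> \<bar>b - (a - c)\<bar> < (c - y)/2 \<Longrightarrow> b \<le> - ((c - y)/2)"
  unfolding abs_less_iff by (simp add: field_simps)
lemma aux2: fixes a b c y :: real shows "y \<le> a \<Longrightarrow> \<bar>b - (a - c)\<bar> < (y - c)/2 \<Longrightarrow> b \<ge> (y - c)/2"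
  unfolding abs_less_iff by (simp add: field_simps)

lemma aux3: fixes x g :: real shows "\<bar>x - g\<bar> < \<bar>g\<bar> / 2 \<Longrightarrow> g > 0 \<Longrightarrow> x \<ge> g / 2"
  unfolding abs_less_iff by (simp add: field_simps)
lemma aux4: fixes x g :: real shows "\<bar>x - g\<bar> < \<bar>g\<bar> / 2 \<Longrightarrow> g < 0 \<Longrightarrow> x \<le> - (- g / 2)"
  unfolding abs_less_iff by (simp add: field_simps)

lemma ode_main:
  fixes h hd u ud :: "real \<Rightarrow> real" and K0 c M :: real
  assumes dh: "eventually (\<lambda>t. (h has_real_derivative hd t) (at t)) at_top"
    and eh: "((\<lambda>t. hd t - ((h t)\<^sup>2 - h t - K0)) \<longlongrightarrow> 0) at_top"
    and du: "eventually (\<lambda>t. (u has_real_derivative ud t) (at t)) at_top"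
    and eu: "((\<lambda>t. ud t - (h t - c)) \<longlongrightarrow> 0) at_top"
    and ub: "eventually (\<lambda>t. \<bar>u t\<bar> \<le> M) at_top"
  shows "(h \<longlongrightarrow> c) at_top \<and> (hd \<longlongrightarrow> 0) at_top"
proof -
  define g where "g y = y\<^sup>2 - y - K0" for y
  have eh': "((\<lambda>t. hd t - g (h t)) \<longlongrightarrow> 0) at_top" using eh by (simp add: g_def)
  have hc: "(h \<longlongrightarrow> c) at_top"
  proof (rule order_tendstoI)
    fix a assume a: "a < c"
    obtain y where y: "a < y" "y < c" "g y \<noteq> 0" using quad_nonroot[OF a, of K0] by (auto simp: g_def)
    have "eventually (\<lambda>t. h t \<ge> y) at_top \<or> eventually (\<lambda>t. h t \<le> y) at_top"
      using dichot[OF dh eh' y(3)] .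
    moreover have "\<not> eventually (\<lambda>t. h t \<le> y) at_top"
    proof
      assume ev: "eventually (\<lambda>t. h t \<le> y) at_top"
      have "eventually (\<lambda>t. \<bar>ud t - (h t - c)\<bar> < (c - y) / 2) at_top"
        using tendstoD[OF eu, of "(c - y) / 2"] y by (simp add: dist_real_def)
      with ev have "eventually (\<lambda>t. ud t \<le> - ((c - y) / 2)) at_top"
        by eventually_elim (rule aux1)
      then show False using no_drift_neg[OF du ub, of "(c - y) / 2"] y by simp
    qed
    ultimately have "eventually (\<lambda>t. h t \<ge> y) at_top" by blast
    then show "eventually (\<lambda>t. a < h t) at_top" by eventually_elim (use y in auto)
  next
    fix a assume a: "c < a"
    obtain y where y: "c < y" "y < a" "g y \<noteq> 0" using quad_nonroot[OF a, of K0] by (auto simp: g_def)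
    have "eventually (\<lambda>t. h t \<ge> y) at_top \<or> eventually (\<lambda>t. h t \<le> y) at_top"
      using dichot[OF dh eh' y(3)] .
    moreover have "\<not> eventually (\<lambda>t. h t \<ge> y) at_top"
    proof
      assume ev: "eventually (\<lambda>t. h t \<ge> y) at_top"
      have "eventually (\<lambda>t. \<bar>ud t - (h t - c)\<bar> < (y - c) / 2) at_top"
        using tendstoD[OF eu, of "(y - c) / 2"] y by (simp add: dist_real_def)
      with ev have "eventually (\<lambda>t. ud t \<ge> (y - c) / 2) at_top"
        by eventually_elim (rule aux2)
      then show False using no_drift[OF du ub, of "(y - c) / 2"] y by simp
    qed
    ultimately have "eventually (\<lambda>t. h t \<le> y) at_top" by blast
    then show "eventually (\<lambda>t. h t < a) at_top" by eventually_elim (use y in auto)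
  qed
  have gh: "((\<lambda>t. g (h t)) \<longlongrightarrow> g c) at_top" unfolding g_def
    by (intro tendsto_intros hc)
  have hdl: "(hd \<longlongrightarrow> g c) at_top"
    using tendsto_add[OF eh' gh] by simp
  have hb: "eventually (\<lambda>t. \<bar>h t\<bar> \<le> \<bar>c\<bar> + 1) at_top"
    using tendstoD[OF hc, of 1] by (auto elim!: eventually_mono simp: dist_real_def)
  have "g c = 0"
  proof (rule ccontr)
    assume ne: "g c \<noteq> 0"
    have ev: "eventually (\<lambda>t. \<bar>hd t - g c\<bar> < \<bar>g c\<bar> / 2) at_top"
      using tendstoD[OF hdl, of "\<bar>g c\<bar> / 2"] ne by (simp add: dist_real_def)
    show False
    proof (cases "g c > 0")
      case True
      from ev have "eventually (\<lambda>t. hd t \<ge> g c / 2) at_top"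
        by (rule eventually_mono) (rule aux3, assumption, rule True)
      then show False using no_drift[OF dh hb, of "g c / 2"] True by simp
    next
      case False
      with ne have "g c < 0" by simp
      from ev have "eventually (\<lambda>t. hd t \<le> - (- g c / 2)) at_top"
        by (rule eventually_mono) (rule aux4, assumption, rule \<open>g c < 0\<close>)
      then show False using no_drift_neg[OF dh hb, of "- g c / 2"] \<open>g c < 0\<close> by simp
    qed
  qed
  then show ?thesis using hc hdl by simp
qed



lemma C2_real_at:
  fixes f :: "real \<Rightarrow> real"
  assumes "C2_on {0<..1} f"
  obtains f' f'' where "\<And>x. x \<in> {0<..<1} \<Longrightarrow> (f has_real_derivative f' x) (at x)"
    "\<And>x. x \<in> {0<..<1} \<Longrightarrow> (f' has_real_derivative f'' x) (at x)"
proof -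
  from assms obtain f' f'' where
    A: "\<forall>x\<in>{0<..1}. (f has_vector_derivative f' x) (at x within {0<..1})"
    and B: "\<forall>x\<in>{0<..1}. (f' has_vector_derivative f'' x) (at x within {0<..1})"
    unfolding C2_on_def by blast
  have sub: "{0<..<1} \<subseteq> {0<..(1::real)}" by auto
  have "(f has_real_derivative f' x) (at x)" if x: "x \<in> {0<..<1}" for x
  proof -
    have "(f has_vector_derivative f' x) (at x within {0<..<1})"
      using has_vector_derivative_within_subset[OF A[rule_format] sub] x by auto
    then have "(f has_vector_derivative f' x) (at x)"
      using has_vector_derivative_within_open[OF x open_greaterThanLessThan] by blast
    then show ?thesis by (simp add: has_real_derivative_iff_has_vector_derivative)
  qed
  moreover have "(f' has_real_derivative f'' x) (at x)" if x: "x \<in> {0<..<1}" for x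
  proof -
    have "(f' has_vector_derivative f'' x) (at x within {0<..<1})"
      using has_vector_derivative_within_subset[OF B[rule_format] sub] x by auto
    then have "(f' has_vector_derivative f'' x) (at x)"
      using has_vector_derivative_within_open[OF x open_greaterThanLessThan] by blast
    then show ?thesis by (simp add: has_real_derivative_iff_has_vector_derivative)
  qed
  ultimately show ?thesis using that by blast
qed

lemma C2_cplx_at:
  fixes f :: "real \<Rightarrow> complex"
  assumes "C2_on {0<..1} f"
  obtains f' where "\<And>x. x \<in> {0<..<1} \<Longrightarrow> (f has_vector_derivative f' x) (at x)"
proof -
  from assms obtain f' where
    A: "\<forall>x\<in>{0<..1}. (f has_vector_derivative f' x) (at x within {0<..1})"
    unfolding C2_on_def by blast
  have sub: "{0<..<1} \<subseteq> {0<..(1::real)}" by auto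
  have "(f has_vector_derivative f' x) (at x)" if x: "x \<in> {0<..<1}" for x
  proof -
    have "(f has_vector_derivative f' x) (at x within {0<..<1})"
      using has_vector_derivative_within_subset[OF A[rule_format] sub] x by auto
    then show "(f has_vector_derivative f' x) (at x)"
      using has_vector_derivative_within_open[OF x open_greaterThanLessThan] by blast
  qed
  then show ?thesis using that by blast
qed

lemma wt_eq: "wt w1 w2 = (\<lambda>x. w1 x * w2 x)" by (rule ext) (simp add: wt_def)

lemma w_reg:
  assumes r1: "C2_on {0<..1} w1" and r2: "C2_on {0<..1} w2" and x: "x \<in> {0<..<1}"
  shows "(wt w1 w2 has_real_derivative deriv (wt w1 w2) x) (at x)
       \<and> (deriv (wt w1 w2) has_real_derivative deriv (deriv (wt w1 w2)) x) (at x)"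
proof -
  obtain a a' where a: "\<And>x. x \<in> {0<..<1} \<Longrightarrow> (w1 has_real_derivative a x) (at x)"
    "\<And>x. x \<in> {0<..<1} \<Longrightarrow> (a has_real_derivative a' x) (at x)" using C2_real_at[OF r1] by blast
  obtain c c' where c: "\<And>x. x \<in> {0<..<1} \<Longrightarrow> (w2 has_real_derivative c x) (at x)"
    "\<And>x. x \<in> {0<..<1} \<Longrightarrow> (c has_real_derivative c' x) (at x)" using C2_real_at[OF r2] by blast
  have D1: "(wt w1 w2 has_real_derivative (a y * w2 y + w1 y * c y)) (at y)" if "y \<in> {0<..<1}" for y
    unfolding wt_eq using a(1)[OF that] c(1)[OF that] by (auto intro!: derivative_eq_intros)
  have de: "deriv (wt w1 w2) y = a y * w2 y + w1 y * c y" if "y \<in> {0<..<1}" for y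
    using D1[OF that] by (rule DERIV_imp_deriv)
  have D2: "((\<lambda>y. a y * w2 y + w1 y * c y) has_real_derivative
      (a' x * w2 x + a x * c x + (a x * c x + w1 x * c' x))) (at x)"
    using a(1)[OF x] a(2)[OF x] c(1)[OF x] c(2)[OF x] by (auto intro!: derivative_eq_intros)
  have D2': "(deriv (wt w1 w2) has_real_derivative
      (a' x * w2 x + a x * c x + (a x * c x + w1 x * c' x))) (at x)"
    by (rule has_field_derivative_transform_within_open[OF D2 open_greaterThanLessThan x])
       (simp add: de)
  then have "deriv (deriv (wt w1 w2)) x = a' x * w2 x + a x * c x + (a x * c x + w1 x * c' x)"
    by (rule DERIV_imp_deriv)
  with D1[OF x] de[OF x] D2' show ?thesis by simp
qed

lemma lin3: fixes a b c e :: real shows "a \<le> b + c \<Longrightarrow> b < e \<Longrightarrow> e \<le> a/2 \<Longrightarrow> a/2 \<le> c" by linarith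

lemma hlf: fixes A X :: real shows "X > 0 \<Longrightarrow> A / (2*X) * X = A/2" by (simp add: field_simps)

lemma sep:
  fixes d :: "real \<Rightarrow> real"
  assumes lim: "((\<lambda>x. ereal (d x)) \<longlongrightarrow> d0) F" and ne: "ereal lam \<noteq> d0"
  shows "\<exists>\<eta>>0. eventually (\<lambda>x. \<bar>d x - lam\<bar> \<ge> \<eta> * (\<bar>d x\<bar> + 1)) F"
proof (cases d0)
  case (real r)
  with ne have rl: "r \<noteq> lam" by simp
  from lim real have "(d \<longlongrightarrow> r) F" by simp
  define \<epsilon> where "\<epsilon> = min 1 (\<bar>r - lam\<bar> / 2)"
  have ep: "\<epsilon> > 0" using rl by (simp add: \<epsilon>_def)
  have ev: "eventually (\<lambda>x. \<bar>d x - r\<bar> < \<epsilon>) F"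
    using tendstoD[OF \<open>(d \<longlongrightarrow> r) F\<close> ep] by (simp add: dist_real_def)
  define \<eta> where "\<eta> = \<bar>r - lam\<bar> / (2 * (\<bar>r\<bar> + 2))"
  have etap: "\<eta> > 0" using rl by (simp add: \<eta>_def)
  have "eventually (\<lambda>x. \<bar>d x - lam\<bar> \<ge> \<eta> * (\<bar>d x\<bar> + 1)) F"
    using ev
  proof eventually_elim
    case (elim x)
    have e1: "\<epsilon> \<le> 1" "\<epsilon> \<le> \<bar>r - lam\<bar> / 2" unfolding \<epsilon>_def by (rule min.cobounded1, rule min.cobounded2)
    have n1: "\<bar>d x\<bar> + 1 \<le> \<bar>r\<bar> + 2" using elim e1 by linarith
    have tri: "\<bar>r - lam\<bar> \<le> \<bar>d x - r\<bar> + \<bar>d x - lam\<bar>" by arith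
    have n2: "\<bar>d x - lam\<bar> \<ge> \<bar>r - lam\<bar> / 2" by (rule lin3[OF tri elim e1(2)])
    have "\<eta> * (\<bar>d x\<bar> + 1) \<le> \<eta> * (\<bar>r\<bar> + 2)" using n1 etap by (intro mult_left_mono) auto
    also have "\<dots> = \<bar>r - lam\<bar> / 2" unfolding \<eta>_def by (rule hlf) simp
    finally show ?case using n2 by linarith
  qed
  then show ?thesis using etap by blast
next
  case PInf
  with lim have "eventually (\<lambda>x. ereal (2 * \<bar>lam\<bar> + 1) < ereal (d x)) F"
    by (simp add: tendsto_PInfty)
  then have "eventually (\<lambda>x. \<bar>d x - lam\<bar> \<ge> 1/2 * (\<bar>d x\<bar> + 1)) F"
    by eventually_elim auto
  then show ?thesis by (intro exI[of _ "1/2"]) auto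
next
  case MInf
  with lim have "eventually (\<lambda>x. ereal (d x) < ereal (- (2 * \<bar>lam\<bar> + 1))) F"
    by (simp add: tendsto_MInfty)
  then have "eventually (\<lambda>x. \<bar>d x - lam\<bar> \<ge> 1/2 * (\<bar>d x\<bar> + 1)) F"
    by eventually_elim auto
  then show ?thesis by (intro exI[of _ "1/2"]) auto
qed

lemma flim_exp: "filterlim (\<lambda>t::real. exp (- t)) (at_right 0) at_top"
proof -
  have "filterlim (\<lambda>t::real. inverse (exp t)) (at_right 0) at_top"
    by (rule filterlim_compose[OF filterlim_inverse_at_right_top exp_at_top])
  then show ?thesis by (simp add: exp_minus)
qed

lemma flim_ln: "filterlim (\<lambda>x::real. - ln x) at_top (at_right 0)"
  using ln_at_0 filterlim_uminus_at_top by (simp add: filterlim_uminus_at_top)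



lemma upper_aux:
  fixes B P P0 D1 D0 N x \<beta> \<eta> \<eta>0 M0 lam lam0 dd :: real
  assumes e: "P - P0 = B * (1/D0 - 1/D1)" and d1: "D1 = dd - lam" and d0: "D0 = dd - lam0"
    and n: "N = \<bar>dd\<bar> + 1" and b0: "0 \<le> B" and bb: "B \<le> (\<beta>*x*N)^2"
    and s1: "\<bar>D1\<bar> \<ge> \<eta>*N" and s0: "\<bar>D0\<bar> \<ge> \<eta>0*N" and ep: "\<eta> > 0" "\<eta>0 > 0"
    and p0: "\<bar>P0\<bar> \<le> M0 * x^2"
  shows "\<bar>P\<bar> \<le> (M0 + \<beta>^2*\<bar>lam0 - lam\<bar>/(\<eta>*\<eta>0)) * x^2"
proof -
  have Np: "N > 0" using n by simp
  have D1p: "\<bar>D1\<bar> > 0" using s1 ep Np by (smt (verit) mult_pos_pos)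
  have D0p: "\<bar>D0\<bar> > 0" using s0 ep Np by (smt (verit) mult_pos_pos)
  have "1/D0 - 1/D1 = (lam0 - lam) / (D0 * D1)" using D1p D0p d1 d0 by (auto simp: field_simps)
  then have "\<bar>P - P0\<bar> = B * \<bar>lam0 - lam\<bar> / (\<bar>D0\<bar> * \<bar>D1\<bar>)" using e b0 by (simp add: abs_mult)
  also have "\<dots> \<le> (\<beta>*x*N)^2 * \<bar>lam0 - lam\<bar> / ((\<eta>0*N) * (\<eta>*N))"
  proof (rule frac_le)
    show "0 \<le> (\<beta>*x*N)^2 * \<bar>lam0 - lam\<bar>" by simp
    show "B * \<bar>lam0 - lam\<bar> \<le> (\<beta>*x*N)^2 * \<bar>lam0 - lam\<bar>" using bb by (intro mult_right_mono) auto
    show "0 < (\<eta>0*N) * (\<eta>*N)" using ep Np by simp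
    show "(\<eta>0*N) * (\<eta>*N) \<le> \<bar>D0\<bar> * \<bar>D1\<bar>" using s0 s1 ep Np by (intro mult_mono) auto
  qed
  also have "\<dots> = \<beta>^2*\<bar>lam0 - lam\<bar>/(\<eta>*\<eta>0) * x^2" using Np ep by (simp add: field_simps power2_eq_square)
  finally have "\<bar>P - P0\<bar> \<le> \<beta>^2*\<bar>lam0 - lam\<bar>/(\<eta>*\<eta>0) * x^2" .
  then have "\<bar>P\<bar> \<le> \<bar>P0\<bar> + \<beta>^2*\<bar>lam0 - lam\<bar>/(\<eta>*\<eta>0) * x^2" by linarith
  then show ?thesis using p0 by (simp add: algebra_simps)
qed

lemma ubound:
  fixes Pv x t M1 M2 :: real
  assumes xt: "x = exp (- t)" and lo: "x\<^sup>2 \<le> M1 * \<bar>Pv\<bar>" and up: "\<bar>Pv\<bar> \<le> M2 * x\<^sup>2" and pn: "Pv \<noteq> 0"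
  shows "\<bar>ln (Pv\<^sup>2) / 2 + 2 * t\<bar> \<le> \<bar>ln M1\<bar> + \<bar>ln M2\<bar>"
proof -
  have xp: "x > 0" using xt by simp
  have ap: "\<bar>Pv\<bar> > 0" using pn by simp
  have x2: "x\<^sup>2 > 0" using xp by simp
  have M1p: "M1 > 0"
  proof (rule ccontr)
    assume "\<not> M1 > 0" then have "M1 * \<bar>Pv\<bar> \<le> 0" using ap by (simp add: mult_nonpos_nonneg)
    then show False using lo x2 by linarith
  qed
  have M2p: "M2 > 0"
  proof (rule ccontr)
    assume "\<not> M2 > 0" then have "M2 * x\<^sup>2 \<le> 0" using x2 by (simp add: mult_nonpos_nonneg)
    then show False using up ap by linarith
  qed
  have lx: "ln x = - t" using xt by simp
  have lP: "ln (Pv\<^sup>2) = 2 * ln \<bar>Pv\<bar>"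
  proof -
    have "Pv\<^sup>2 = \<bar>Pv\<bar>^2" by simp
    then show ?thesis by (simp only: ln_realpow)
  qed
  have lx2: "ln (x\<^sup>2) = 2 * ln x" by (simp add: ln_realpow)
  have "x\<^sup>2 / M1 \<le> \<bar>Pv\<bar>" using lo M1p by (simp add: divide_le_eq mult.commute)
  then have "ln (x\<^sup>2 / M1) \<le> ln \<bar>Pv\<bar>" using x2 M1p ap by simp
  moreover have "ln (x\<^sup>2 / M1) = ln (x\<^sup>2) - ln M1" using x2 M1p by (simp add: ln_div)
  ultimately have L: "- 2 * t - ln M1 \<le> ln \<bar>Pv\<bar>" using lx2 lx by simp
  have "ln \<bar>Pv\<bar> \<le> ln (M2 * x\<^sup>2)" using up x2 M2p ap by simp
  moreover have "ln (M2 * x\<^sup>2) = ln M2 + ln (x\<^sup>2)" using x2 M2p by (simp add: ln_mult)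
  ultimately have U: "ln \<bar>Pv\<bar> \<le> ln M2 - 2 * t" using lx2 lx by simp
  have e: "ln (Pv\<^sup>2) / 2 + 2 * t = ln \<bar>Pv\<bar> + 2 * t" using lP by simp
  show ?thesis unfolding e using L U by linarith
qed



theorem lemma6p3:
  fixes p d q w1 w2 :: "real \<Rightarrow> real"
    and b c :: "real \<Rightarrow> complex"
    and d0 :: ereal
    and rho0 kappa0 :: "real \<Rightarrow> complex"
  assumes reg_p: "C2_on {0<..1} p" and reg_d: "C2_on {0<..1} d"
    and reg_b: "C2_on {0<..1} b" and reg_c: "C1_on {0<..1} c"
    and reg_q: "continuous_on {0<..1} q"
    and p_pos: "\<forall>x\<in>{0<..1}. p x > 0"
    and reg_w1: "C2_on {0<..1} w1" and reg_w2: "C2_on {0<..1} w2"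
    and w_pos: "\<forall>x\<in>{0<..<1}. wt w1 w2 x > 0"
    and B1: "((\<lambda>x. ereal (d x)) \<longlongrightarrow> d0) (at_right 0)"
    and B2: "\<exists>\<beta>>0. \<exists>\<gamma>>0. \<forall>x\<in>{0<..1}.
               cmod (b x / complex_of_real x) \<le> \<beta> * (\<bar>d x\<bar> + 1)
             \<and> cmod (c x) \<le> \<gamma> * (\<bar>d x\<bar> + 1)"
    and B3a: "\<exists>lam::real. ereal lam \<noteq> d0 \<and> (\<exists>xl\<in>{0<..<1}.
               (\<forall>x\<in>{0<..xl}. d x \<noteq> lam)
             \<and> bounded ((\<lambda>x. pit p b d w1 w2 x lam / x\<^sup>2) ` {0<..xl}))"
    and B3b: "\<forall>lam::real. ereal lam \<noteq> d0 \<and> lam \<notin> closure (Deltat p b d w1 w2 ` {0<..1}) \<longrightarrow>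
             (\<exists>xl\<in>{0<..<1}.
               (\<forall>x\<in>{0<..xl}. d x \<noteq> lam \<and> pit p b d w1 w2 x lam \<noteq> 0)
             \<and> bounded ((\<lambda>x. x\<^sup>2 / pit p b d w1 w2 x lam) ` {0<..xl})
             \<and> bounded ((\<lambda>x. rhot p b c d w1 w2 x lam / complex_of_real x) ` {0<..xl})
             \<and> bounded ((\<lambda>x. kappat p b c d q w1 w2 x lam) ` {0<..xl}))"
    and C1: "\<forall>lam::real. ereal lam \<noteq> d0 \<and> lam \<notin> closure (Deltat p b d w1 w2 ` {0<..1}) \<longrightarrow>
             ((\<lambda>x. complex_of_real x * rhot p b c d w1 w2 x lam
                    / complex_of_real (pit p b d w1 w2 x lam)) \<longlongrightarrow> rho0 lam) (at_right 0)
           \<and> ((\<lambda>x. complex_of_real (x\<^sup>2) * kappat p b c d q w1 w2 x lam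
                    / complex_of_real (pit p b d w1 w2 x lam)) \<longlongrightarrow> kappa0 lam) (at_right 0)"
    and C2: "\<exists>L::real. ((\<lambda>x. x\<^sup>2 * deriv (deriv (wt w1 w2)) x / wt w1 w2 x) \<longlongrightarrow> L) (at_right 0)"
  shows "\<forall>lam::real. ereal lam \<noteq> d0 \<and> lam \<notin> closure (Deltat p b d w1 w2 ` {0<..1}) \<longrightarrow>
           ((\<lambda>x. x * deriv (\<lambda>y. pit p b d w1 w2 y lam) x / pit p b d w1 w2 x lam) \<longlongrightarrow> 2)
              (at_right 0)
         \<and> (let W = (\<lambda>t::real. 1 + exp (- t) * deriv (wt w1 w2) (exp (- t)) / wt w1 w2 (exp (- t)))
            in \<exists>L::real. (W \<longlongrightarrow> L) at_top \<and> ((\<lambda>t. deriv W t) \<longlongrightarrow> 0) at_top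
                  \<and> Im (rho0 lam) = 1 + L)"
proof (intro allI impI)
  fix lam :: real
  assume lamA: "ereal lam \<noteq> d0 \<and> lam \<notin> closure (Deltat p b d w1 w2 ` {0<..1})"
  define w where "w = wt w1 w2"
  define P where "P = (\<lambda>y. pit p b d w1 w2 y lam)"
  define Y where "Y = (\<lambda>x. x * deriv w x / w x)"
  define Zp where "Zp = (\<lambda>x. x * deriv P x / P x)"
  define K where "K = (\<lambda>x. x\<^sup>2 * deriv (deriv w) x / w x)"
  obtain xl where xl: "xl \<in> {0<..<1}" and xl1: "\<forall>x\<in>{0<..xl}. d x \<noteq> lam \<and> P x \<noteq> 0"
    and bd1: "bounded ((\<lambda>x. x\<^sup>2 / P x) ` {0<..xl})"
    using B3b lamA unfolding P_def by blast
  obtain M1 where M1: "\<forall>x\<in>{0<..xl}. \<bar>x\<^sup>2 / P x\<bar> \<le> M1"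
    using bd1 unfolding bounded_iff by auto
  have rlim: "((\<lambda>x. complex_of_real x * rhot p b c d w1 w2 x lam
                    / complex_of_real (P x)) \<longlongrightarrow> rho0 lam) (at_right 0)"
    using C1 lamA unfolding P_def by blast
  obtain K0 where K0: "(K \<longlongrightarrow> K0) (at_right 0)" using C2 unfolding K_def w_def by blast
  obtain lam0 xl0 where l0: "ereal lam0 \<noteq> d0" and xl0: "xl0 \<in> {0<..<1}"
    and bd0: "bounded ((\<lambda>x. pit p b d w1 w2 x lam0 / x\<^sup>2) ` {0<..xl0})"
    using B3a by blast
  obtain M0 where M0: "\<forall>x\<in>{0<..xl0}. \<bar>pit p b d w1 w2 x lam0 / x\<^sup>2\<bar> \<le> M0"
    using bd0 unfolding bounded_iff by auto
  obtain \<beta> where bet: "\<beta> > 0" "\<forall>x\<in>{0<..1}. cmod (b x / complex_of_real x) \<le> \<beta> * (\<bar>d x\<bar> + 1)"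
    using B2 by blast
  obtain \<eta> where eta: "\<eta> > 0" "eventually (\<lambda>x. \<bar>d x - lam\<bar> \<ge> \<eta> * (\<bar>d x\<bar> + 1)) (at_right 0)"
    using sep[OF B1] lamA by blast
  obtain \<eta>0 where eta0: "\<eta>0 > 0" "eventually (\<lambda>x. \<bar>d x - lam0\<bar> \<ge> \<eta>0 * (\<bar>d x\<bar> + 1)) (at_right 0)"
    using sep[OF B1 l0] by blast
  have ev0: "eventually (\<lambda>x::real. x < min xl xl0) (at_right 0)"
    unfolding eventually_at_right_field using xl xl0 by (intro exI[of _ "min xl xl0"]) auto
  from eventually_conj[OF ev0 eventually_conj[OF eta(2) eta0(2)]]
  obtain x1 where x1: "x1 > 0" and x1P: "\<And>x. 0 < x \<Longrightarrow> x < x1 \<Longrightarrow> x < min xl xl0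
       \<and> \<bar>d x - lam\<bar> \<ge> \<eta> * (\<bar>d x\<bar> + 1) \<and> \<bar>d x - lam0\<bar> \<ge> \<eta>0 * (\<bar>d x\<bar> + 1)"
    unfolding eventually_at_right_field by auto
  obtain w1' w1'' where w1d: "\<And>x. x \<in> {0<..<1} \<Longrightarrow> (w1 has_real_derivative w1' x) (at x)"
    and "\<And>x. x \<in> {0<..<1} \<Longrightarrow> (w1' has_real_derivative w1'' x) (at x)"
    by (rule C2_real_at[OF reg_w1]) blast
  obtain w2' w2'' where w2d: "\<And>x. x \<in> {0<..<1} \<Longrightarrow> (w2 has_real_derivative w2' x) (at x)"
    and "\<And>x. x \<in> {0<..<1} \<Longrightarrow> (w2' has_real_derivative w2'' x) (at x)"
    by (rule C2_real_at[OF reg_w2]) blast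
  obtain p' p'' where pd: "\<And>x. x \<in> {0<..<1} \<Longrightarrow> (p has_real_derivative p' x) (at x)"
    and "\<And>x. x \<in> {0<..<1} \<Longrightarrow> (p' has_real_derivative p'' x) (at x)"
    by (rule C2_real_at[OF reg_p]) blast
  obtain d' d'' where dd: "\<And>x. x \<in> {0<..<1} \<Longrightarrow> (d has_real_derivative d' x) (at x)"
    and "\<And>x. x \<in> {0<..<1} \<Longrightarrow> (d' has_real_derivative d'' x) (at x)"
    by (rule C2_real_at[OF reg_d]) blast
  obtain b' where bd: "\<And>x. x \<in> {0<..<1} \<Longrightarrow> (b has_vector_derivative b' x) (at x)"
    by (rule C2_cplx_at[OF reg_b]) blast
  define M2 where "M2 = M0 + \<beta>^2*\<bar>lam0 - lam\<bar>/(\<eta>*\<eta>0)"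

  have ptA: "x \<in> {0<..<1} \<and> x \<in> {0<..xl} \<and> x \<in> {0<..xl0} \<and> w x > 0 \<and> P x \<noteq> 0 \<and> d x \<noteq> lam"
    if x: "0 < x" "x < x1" for x
  proof -
    have "x < min xl xl0" using x1P[OF x] by blast
    then have a: "x \<in> {0<..<1}" "x \<in> {0<..xl}" "x \<in> {0<..xl0}" using x xl xl0 by auto
    then show ?thesis using w_pos xl1 unfolding w_def by auto
  qed
  have wder: "(w has_real_derivative deriv w x) (at x) \<and> (deriv w has_real_derivative deriv (deriv w) x) (at x)"
    if x: "0 < x" "x < x1" for x
    using w_reg[OF reg_w1 reg_w2] ptA[OF x] unfolding w_def by blast
  have Pder: "(P has_real_derivative deriv P x) (at x)" if x: "0 < x" "x < x1" for x
  proof -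
    have a: "x \<in> {0<..<1}" "w x > 0" "d x \<noteq> lam" using ptA[OF x] by auto
    then have w1n: "w1 x \<noteq> 0" unfolding w_def wt_def by auto
    have dn: "d x - lam \<noteq> 0" using a by simp
    have Peq: "P = (\<lambda>y. w2 y / w1 y * p y - ((Re (b y))\<^sup>2 + (Im (b y))\<^sup>2) / (d y - lam))"
      unfolding P_def pit_def by (simp add: cmod_power2)
    have "\<exists>D. (P has_real_derivative D) (at x)" unfolding Peq
      by (rule exI) (auto intro!: derivative_eq_intros w1d[OF a(1)] w2d[OF a(1)] pd[OF a(1)] dd[OF a(1)]
          has_field_derivative_Re has_field_derivative_Im bd[OF a(1)] w1n dn)
    then obtain D where D: "(P has_real_derivative D) (at x)" by blast
    then have "deriv P x = D" by (rule DERIV_imp_deriv)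
    then show ?thesis using D by simp
  qed
  have ImEq: "Im (complex_of_real x * rhot p b c d w1 w2 x lam / complex_of_real (P x)) = Y x + Zp x"
    if x: "0 < x" "x < x1" for x
  proof -
    have a: "w x > 0" "P x \<noteq> 0" using ptA[OF x] by auto
    have "((\<lambda>y. w y * P y) has_real_derivative (deriv w x * P x + w x * deriv P x)) (at x)"
      using wder[OF x] Pder[OF x] by (auto intro!: derivative_eq_intros)
    then have dm: "deriv (\<lambda>y. w y * P y) x = deriv w x * P x + w x * deriv P x"
      by (rule DERIV_imp_deriv)
    have fe: "(\<lambda>y. wt w1 w2 y * pit p b d w1 w2 y lam) = (\<lambda>y. w y * P y)"
      by (simp add: w_def P_def)
    have "Im (complex_of_real x * rhot p b c d w1 w2 x lam / complex_of_real (P x))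
        = x * (1 / w x * deriv (\<lambda>y. w y * P y) x) / P x"
      unfolding rhot_def fe by (simp add: w_def)
    also have "\<dots> = Y x + Zp x" unfolding dm Y_def Zp_def using a by (simp add: field_simps)
    finally show ?thesis .
  qed
  have lowb: "x\<^sup>2 \<le> M1 * \<bar>P x\<bar>" if x: "0 < x" "x < x1" for x
  proof -
    have a: "x \<in> {0<..xl}" "P x \<noteq> 0" using ptA[OF x] by auto
    have "\<bar>x\<^sup>2 / P x\<bar> \<le> M1" using M1 a by blast
    then have "x\<^sup>2 / \<bar>P x\<bar> \<le> M1" by (simp add: abs_divide)
    then show ?thesis using a by (simp add: divide_le_eq)
  qed
  have upb: "\<bar>P x\<bar> \<le> M2 * x\<^sup>2" if x: "0 < x" "x < x1" for x
  proof -
    have a: "x \<in> {0<..<1}" "x \<in> {0<..xl0}" using ptA[OF x] by auto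
    have s: "\<bar>d x - lam\<bar> \<ge> \<eta> * (\<bar>d x\<bar> + 1)" "\<bar>d x - lam0\<bar> \<ge> \<eta>0 * (\<bar>d x\<bar> + 1)"
      using x1P[OF x] by auto
    have p0: "\<bar>pit p b d w1 w2 x lam0\<bar> \<le> M0 * x^2"
    proof -
      have "\<bar>pit p b d w1 w2 x lam0 / x\<^sup>2\<bar> \<le> M0" using M0 a by blast
      then show ?thesis using x by (simp add: abs_divide divide_le_eq)
    qed
    have cb: "cmod (b x) \<le> \<beta> * x * (\<bar>d x\<bar> + 1)"
    proof -
      have "cmod (b x / complex_of_real x) \<le> \<beta> * (\<bar>d x\<bar> + 1)" using bet a by auto
      then have "cmod (b x) / x \<le> \<beta> * (\<bar>d x\<bar> + 1)" using x by (simp add: norm_divide)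
      then show ?thesis using x by (simp add: divide_le_eq algebra_simps)
    qed
    have bb: "(cmod (b x))\<^sup>2 \<le> (\<beta> * x * (\<bar>d x\<bar> + 1))^2"
      using cb by (intro power_mono) auto
    have e: "P x - pit p b d w1 w2 x lam0 = (cmod (b x))\<^sup>2 * (1/(d x - lam0) - 1/(d x - lam))"
      unfolding P_def pit_def by (simp add: right_diff_distrib)
    show ?thesis unfolding M2_def
      by (rule upper_aux[OF e refl refl refl _ bb s(1) s(2) eta(1) eta0(1) p0]) simp
  qed
  define T where "T = - ln x1 + 1"
  have xt: "0 < exp (- t) \<and> exp (- t) < x1" if "t \<ge> T" for t
  proof -
    have "exp (- t) \<le> exp (ln x1 - 1)" using that by (simp add: T_def)
    also have "\<dots> < exp (ln x1)" by simp
    also have "\<dots> = x1" using x1 by simp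
    finally show ?thesis by simp
  qed
  have evT: "eventually (\<lambda>t. t \<ge> T) at_top" by (rule eventually_ge_at_top)
  define h where "h = (\<lambda>t. Y (exp (- t)))"
  define hd where "hd = (\<lambda>t. (h t)\<^sup>2 - h t - K (exp (- t)))"
  define u where "u = (\<lambda>t. ln ((P (exp (- t)))\<^sup>2) / 2 + 2 * t)"
  define ud where "ud = (\<lambda>t. 2 - Zp (exp (- t)))"
  define cc where "cc = Im (rho0 lam) - 2"
  have ed: "((\<lambda>t. exp (- t)) has_real_derivative - exp (- t)) (at t)" for t :: real
    by (auto intro!: derivative_eq_intros)
  have dh: "eventually (\<lambda>t. (h has_real_derivative hd t) (at t)) at_top"
    using evT
  proof eventually_elim
    case (elim t)
    define x where "x = exp (- t)"
    have x: "0 < x" "x < x1" using xt[OF elim] by (auto simp: x_def)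
    have wp: "w x > 0" using ptA[OF x] by simp
    have Yd: "(Y has_real_derivative
        ((deriv w x + x * deriv (deriv w) x) * w x - x * deriv w x * deriv w x) / (w x * w x)) (at x)"
      unfolding Y_def using wder[OF x] wp by (auto intro!: derivative_eq_intros)
    have "((\<lambda>t. Y (exp (- t))) has_real_derivative
        ((deriv w x + x * deriv (deriv w) x) * w x - x * deriv w x * deriv w x) / (w x * w x) * (- exp (- t))) (at t)"
      using DERIV_chain2[OF Yd[unfolded x_def] ed] unfolding x_def .
    moreover have "((deriv w x + x * deriv (deriv w) x) * w x - x * deriv w x * deriv w x) / (w x * w x) * (- exp (- t))
        = hd t"
      unfolding hd_def h_def Y_def K_def x_def[symmetric] using wp
      by (simp add: field_simps power2_eq_square)
    ultimately show ?case unfolding h_def by simp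
  qed
  have Kc: "((\<lambda>t. K (exp (- t))) \<longlongrightarrow> K0) at_top"
    by (rule filterlim_compose[OF K0 flim_exp])
  have eh: "((\<lambda>t. hd t - ((h t)\<^sup>2 - h t - K0)) \<longlongrightarrow> 0) at_top"
  proof -
    have "((\<lambda>t. K0 - K (exp (- t))) \<longlongrightarrow> K0 - K0) at_top" by (intro tendsto_intros Kc)
    then show ?thesis by (simp add: hd_def)
  qed
  have du: "eventually (\<lambda>t. (u has_real_derivative ud t) (at t)) at_top"
    using evT
  proof eventually_elim
    case (elim t)
    define x where "x = exp (- t)"
    have x: "0 < x" "x < x1" using xt[OF elim] by (auto simp: x_def)
    have pn: "P x \<noteq> 0" using ptA[OF x] by simp
    have Fd: "((\<lambda>t. P (exp (- t))) has_real_derivative deriv P x * (- exp (- t))) (at t)"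
      using DERIV_chain2[OF Pder[OF x, unfolded x_def] ed] unfolding x_def .
    have pn': "P (exp (- t)) \<noteq> 0" using pn by (simp add: x_def)
    have pp: "0 < (P (exp (- t)))\<^sup>2" using pn' by simp
    have "(u has_real_derivative
        (1 / (P (exp (- t)))\<^sup>2 * (2 * P (exp (- t)) * (deriv P x * (- exp (- t))))) / 2 + 2) (at t)"
      unfolding u_def using pp by (auto intro!: derivative_eq_intros Fd)
    moreover have "(1 / (P (exp (- t)))\<^sup>2 * (2 * P (exp (- t)) * (deriv P x * (- exp (- t))))) / 2 + 2 = ud t"
      unfolding ud_def Zp_def x_def[symmetric] using pn by (simp add: field_simps power2_eq_square)
    ultimately show ?case by simp
  qed
  have YZ: "((\<lambda>x. Y x + Zp x) \<longlongrightarrow> Im (rho0 lam)) (at_right 0)"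
  proof -
    have "((\<lambda>x. Im (complex_of_real x * rhot p b c d w1 w2 x lam / complex_of_real (P x)))
        \<longlongrightarrow> Im (rho0 lam)) (at_right 0)" by (rule tendsto_Im[OF rlim])
    moreover have "eventually (\<lambda>x. Im (complex_of_real x * rhot p b c d w1 w2 x lam / complex_of_real (P x))
        = Y x + Zp x) (at_right 0)"
      unfolding eventually_at_right_field using x1 ImEq by blast
    ultimately show ?thesis by (rule Lim_transform_eventually)
  qed
  have eu: "((\<lambda>t. ud t - (h t - cc)) \<longlongrightarrow> 0) at_top"
  proof -
    have "((\<lambda>t. Y (exp (- t)) + Zp (exp (- t))) \<longlongrightarrow> Im (rho0 lam)) at_top"
      by (rule filterlim_compose[OF YZ flim_exp])
    then have "((\<lambda>t. Im (rho0 lam) - (Y (exp (- t)) + Zp (exp (- t)))) \<longlongrightarrow> Im (rho0 lam) - Im (rho0 lam)) at_top"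
      by (intro tendsto_intros)
    then show ?thesis by (simp add: ud_def h_def cc_def algebra_simps)
  qed
  have ub: "eventually (\<lambda>t. \<bar>u t\<bar> \<le> \<bar>ln M1\<bar> + \<bar>ln M2\<bar>) at_top"
    using evT
  proof eventually_elim
    case (elim t)
    define x where "x = exp (- t)"
    have x: "0 < x" "x < x1" using xt[OF elim] by (auto simp: x_def)
    show ?case unfolding u_def x_def[symmetric]
      by (rule ubound[OF x_def lowb[OF x] upb[OF x]]) (use ptA[OF x] in simp)
  qed
  from ode_main[OF dh eh du eu ub] have hc: "(h \<longlongrightarrow> cc) at_top" and hd0: "(hd \<longlongrightarrow> 0) at_top"
    by auto
  have Yc: "(Y \<longlongrightarrow> cc) (at_right 0)"
  proof -
    have "((\<lambda>x. h (- ln x)) \<longlongrightarrow> cc) (at_right 0)" by (rule filterlim_compose[OF hc flim_ln])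
    moreover have "eventually (\<lambda>x. h (- ln x) = Y x) (at_right 0)"
      unfolding eventually_at_right_field by (intro exI[of _ 1]) (auto simp: h_def)
    ultimately show ?thesis by (rule Lim_transform_eventually)
  qed
  have Zc: "(Zp \<longlongrightarrow> 2) (at_right 0)"
  proof -
    have "((\<lambda>x. (Y x + Zp x) - Y x) \<longlongrightarrow> Im (rho0 lam) - cc) (at_right 0)"
      by (intro tendsto_intros YZ Yc)
    then show ?thesis by (simp add: cc_def)
  qed
  have G1: "((\<lambda>x. x * deriv (\<lambda>y. pit p b d w1 w2 y lam) x / pit p b d w1 w2 x lam) \<longlongrightarrow> 2) (at_right 0)"
    using Zc unfolding Zp_def P_def .
  define W where "W = (\<lambda>t::real. 1 + exp (- t) * deriv (wt w1 w2) (exp (- t)) / wt w1 w2 (exp (- t)))"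
  have Wh: "W = (\<lambda>t. 1 + h t)" unfolding W_def h_def Y_def w_def by simp
  have WL: "(W \<longlongrightarrow> 1 + cc) at_top" unfolding Wh by (intro tendsto_intros hc)
  have dW: "eventually (\<lambda>t. deriv W t = hd t) at_top"
    using dh
  proof eventually_elim
    case (elim t)
    have "(W has_real_derivative 0 + hd t) (at t)" unfolding Wh
      by (intro derivative_intros elim)
    then show ?case by (simp add: DERIV_imp_deriv)
  qed
  have dW0: "((\<lambda>t. deriv W t) \<longlongrightarrow> 0) at_top"
    by (rule Lim_transform_eventually[OF hd0]) (use dW in \<open>auto elim: eventually_mono\<close>)
  have G2: "\<exists>L::real. (W \<longlongrightarrow> L) at_top \<and> ((\<lambda>t. deriv W t) \<longlongrightarrow> 0) at_top \<and> Im (rho0 lam) = 1 + L"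
    using WL dW0 by (intro exI[of _ "1 + cc"]) (simp add: cc_def)
  show "((\<lambda>x. x * deriv (\<lambda>y. pit p b d w1 w2 y lam) x / pit p b d w1 w2 x lam) \<longlongrightarrow> 2)
              (at_right 0)
         \<and> (let W = (\<lambda>t::real. 1 + exp (- t) * deriv (wt w1 w2) (exp (- t)) / wt w1 w2 (exp (- t)))
            in \<exists>L::real. (W \<longlongrightarrow> L) at_top \<and> ((\<lambda>t. deriv W t) \<longlongrightarrow> 0) at_top
                  \<and> Im (rho0 lam) = 1 + L)"
    using G1 G2 unfolding W_def Let_def by blast
qed

end
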